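(* Let $L$ be an upper semimodular lattice of finite length. Let $\xi=(x_1,\dots,x_k)\in L^k$ and let $z\in L$ with $z\not\le c_1(\xi)$. Put $$P_\xi=\{i: x_i\parallel z\},\qquad B_\xi=\{i: x_i<z\}.$$ If $|P_\xi|\le|B_\xi|$, then $z\notin M(\xi)$.
   Context: A lattice is upper semimodular if for all $x,y$, $x\wedge y\prec x$ implies $y\prec x\vee y$. $d(x,y)$ is the length of a shortest path between $x$ and $y$ in the undirected covering graph of $L$. $c_1(\xi)=x_1\vee\dots\vee x_k$. $M(\xi)$ is the set of medians of $\xi$, i.e. the elements $y\in L$ minimizing $r(y,\xi)=\sum_{i=1}^k d(y,x_i)$. $x\parallel z$ means that $x$ and $z$ are incomparable. *)

theory Defs
  imports Main
begin

definition covers :: "'a::order \<Rightarrow> 'a \<Rightarrow> bool" (infix "\<prec>" 50) where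
  "x \<prec> y \<longleftrightarrow> x < y \<and> \<not> (\<exists>z. x < z \<and> z < y)"

definition upper_semimodular :: "'a::lattice itself \<Rightarrow> bool" where
  "upper_semimodular _ \<longleftrightarrow> (\<forall>x y::'a. inf x y \<prec> x \<longrightarrow> y \<prec> sup x y)"

definition finite_length :: "'a::order itself \<Rightarrow> bool" where
  "finite_length _ \<longleftrightarrow> (\<exists>n. \<forall>C::'a set. Complete_Partial_Order.chain (\<le>) C \<longrightarrow> finite C \<and> card C \<le> n)"

definition cover_edges :: "('a::order \<times> 'a) set" where
  "cover_edges = {(x, y). x \<prec> y \<or> y \<prec> x}"

definition cdist :: "'a::order \<Rightarrow> 'a \<Rightarrow> nat" where
  "cdist x y = (LEAST n. (x, y) \<in> cover_edges ^^ n)"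

definition c1 :: "'a::lattice list \<Rightarrow> 'a" where
  "c1 xs = Sup_fin (set xs)"

definition remote :: "'a::order \<Rightarrow> 'a list \<Rightarrow> nat" where
  "remote y xs = (\<Sum>x\<leftarrow>xs. cdist y x)"

definition medians :: "'a::order list \<Rightarrow> 'a set" where
  "medians xs = {y. \<forall>w. remote y xs \<le> remote w xs}"

end

theory Submission
  imports Defs
begin

lemma fl_bound:
  assumes "finite_length TYPE('a::order)"
  obtains N where "\<And>C::'a set. Complete_Partial_Order.chain (\<le>) C \<Longrightarrow> finite C \<and> card C \<le> N"
  using assms unfolding finite_length_def by blast

lemma wf_down:
  assumes fl: "finite_length TYPE('a::order)"
  shows "wf {(x::'a, y). x < y}"
proof (rule ccontr)
  assume "\<not> ?thesis"
  then obtain f :: "nat \<Rightarrow> 'a" where f: "\<And>i. f (Suc i) < f i"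
    unfolding wf_iff_no_infinite_down_chain by auto
  have dec: "i < j \<Longrightarrow> f j < f i" for i j
  proof (induction j)
    case 0 thus ?case by simp
  next
    case (Suc j) thus ?case using f less_trans by (metis less_Suc_eq)
  qed
  have ch: "Complete_Partial_Order.chain (\<le>) (range f)"
    unfolding chain_def
  proof (intro ballI)
    fix x y assume "x \<in> range f" "y \<in> range f"
    then obtain i j where "x = f i" "y = f j" by blast
    then show "x \<le> y \<or> y \<le> x" using dec[of i j] dec[of j i]
      by (cases i j rule: linorder_cases) auto
  qed
  have "inj f" unfolding inj_def using dec
    by (metis less_irrefl linorder_neqE_nat)
  moreover obtain N where "\<And>C::'a set. Complete_Partial_Order.chain (\<le>) C \<Longrightarrow> finite C \<and> card C \<le> N"
    using fl_bound[OF fl] by blast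
  ultimately show False using ch finite_imageD[of f UNIV] by auto
qed

lemma wf_up:
  assumes fl: "finite_length TYPE('a::order)"
  shows "wf {(x::'a, y). y < x}"
proof (rule ccontr)
  assume "\<not> ?thesis"
  then obtain f :: "nat \<Rightarrow> 'a" where f: "\<And>i. f i < f (Suc i)"
    unfolding wf_iff_no_infinite_down_chain by auto
  have dec: "i < j \<Longrightarrow> f i < f j" for i j
  proof (induction j)
    case 0 thus ?case by simp
  next
    case (Suc j) thus ?case using f less_trans by (metis less_Suc_eq)
  qed
  have ch: "Complete_Partial_Order.chain (\<le>) (range f)"
    unfolding chain_def
  proof (intro ballI)
    fix x y assume "x \<in> range f" "y \<in> range f"
    then obtain i j where "x = f i" "y = f j" by blast
    then show "x \<le> y \<or> y \<le> x" using dec[of i j] dec[of j i]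
      by (cases i j rule: linorder_cases) auto
  qed
  have "inj f" unfolding inj_def using dec
    by (metis less_irrefl linorder_neqE_nat)
  moreover obtain N where "\<And>C::'a set. Complete_Partial_Order.chain (\<le>) C \<Longrightarrow> finite C \<and> card C \<le> N"
    using fl_bound[OF fl] by blast
  ultimately show False using ch finite_imageD[of f UNIV] by auto
qed

inductive cc :: "'a::order \<Rightarrow> 'a \<Rightarrow> nat \<Rightarrow> bool" where
  cc0: "cc a a 0"
| ccS: "a \<prec> c \<Longrightarrow> cc c b n \<Longrightarrow> cc a b (Suc n)"

lemma cc_le: "cc a b n \<Longrightarrow> a \<le> b"
  by (induction rule: cc.induct) (auto simp: covers_def)

lemma cc_0': "cc a b n \<Longrightarrow> n = 0 \<Longrightarrow> a = b"
  by (induction rule: cc.induct) auto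

lemma cc_0: "cc a b 0 \<Longrightarrow> a = b" using cc_0' by blast

lemma cc_aa': "cc a b n \<Longrightarrow> b = a \<Longrightarrow> n = 0"
  by (induction rule: cc.induct) (auto simp: covers_def dest: cc_le)

lemma cc_aa: "cc a a n \<Longrightarrow> n = 0" using cc_aa' by blast

lemma cc_trans: "cc a b n \<Longrightarrow> cc b c m \<Longrightarrow> cc a c (n + m)"
  by (induction rule: cc.induct) (auto intro: cc.intros)

lemma cc_path: "cc a b n \<Longrightarrow> (a, b) \<in> cover_edges ^^ n \<and> (b, a) \<in> cover_edges ^^ n"
proof (induction rule: cc.induct)
  case (cc0 a) thus ?case by simp
next
  case (ccS a c b n)
  have "(a, c) \<in> cover_edges" "(c, a) \<in> cover_edges" using ccS(1) by (auto simp: cover_edges_def)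
  thus ?case using ccS(3) by (meson relpow_Suc_I relpow_Suc_I2)
qed

lemma cover_ex:
  assumes fl: "finite_length TYPE('a::order)" and ab: "(a::'a) < b"
  shows "\<exists>c. a \<prec> c \<and> c \<le> b"
proof -
  have "b \<in> {c. a < c \<and> c \<le> b}" using ab by simp
  then obtain c where c: "c \<in> {c. a < c \<and> c \<le> b}"
    and mn: "\<And>y. (y, c) \<in> {(x::'a, y). x < y} \<Longrightarrow> y \<notin> {c. a < c \<and> c \<le> b}"
    using wfE_min[OF wf_down[OF fl] \<open>b \<in> {c. a < c \<and> c \<le> b}\<close>] by blast
  have "a \<prec> c" unfolding covers_def using c mn by (auto dest: order.strict_implies_order)
    (meson c dual_order.trans mem_Collect_eq order.strict_implies_order)
  thus ?thesis using c by blast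
qed

lemma cc_ex:
  assumes fl: "finite_length TYPE('a::order)"
  shows "(a::'a) \<le> b \<Longrightarrow> \<exists>n. cc a b n"
proof (induction a rule: wf_induct_rule[OF wf_up[OF fl]])
  case (1 a)
  show ?case
  proof (cases "a = b")
    case True thus ?thesis using cc0 by blast
  next
    case False
    then have "a < b" using 1(2) by simp
    then obtain c where c: "a \<prec> c" "c \<le> b" using cover_ex[OF fl] by blast
    then have "(c, a) \<in> {(x, y). y < x}" by (simp add: covers_def)
    then obtain n where "cc c b n" using 1(1) c by blast
    thus ?thesis using c ccS by blast
  qed
qed

lemma cc_unique:
  assumes usm: "upper_semimodular TYPE('a::lattice)"
    and fl: "finite_length TYPE('a)"
  shows "cc (a::'a) b n \<Longrightarrow> cc a b m \<Longrightarrow> n = m"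
proof (induction n arbitrary: a b m rule: less_induct)
  case (less n a b m)
  show ?case
  proof (cases n)
    case 0
    then have "a = b" using less.prems(1) cc_0 by simp
    then show ?thesis using less.prems(2) cc_aa 0 by simp
  next
    case (Suc n')
    obtain x where ax: "a \<prec> x" and xb: "cc x b n'"
      using less.prems(1) Suc by (auto elim: cc.cases)
    have "m \<noteq> 0"
    proof
      assume "m = 0" then have "a = b" using less.prems(2) cc_0 by simp
      then show False using less.prems(1) cc_aa[of a n] Suc by simp
    qed
    then obtain m' where Sm: "m = Suc m'" by (cases m) auto
    obtain y where ay: "a \<prec> y" and yb: "cc y b m'"
      using less.prems(2) Sm by (auto elim: cc.cases)
    show ?thesis
    proof (cases "x = y")
      case True
      then show ?thesis using less.IH[of n' x b m'] Suc Sm xb yb by simp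
    next
      case False
      have ixy: "inf x y = a"
      proof (rule ccontr)
        assume ne: "inf x y \<noteq> a"
        have "a \<le> inf x y" using ax ay unfolding covers_def by (auto intro: less_imp_le)
        then have lt: "a < inf x y" using ne order_less_le by blast
        have "inf x y = x" using ax lt unfolding covers_def
          by (metis inf.absorb_iff2 inf_le1 order.not_eq_order_implies_strict inf_commute)
        moreover have "inf x y = y" using ay lt unfolding covers_def
          by (metis inf_le2 order.not_eq_order_implies_strict)
        ultimately show False using False by simp
      qed
      have u: "\<forall>p q::'a. inf p q \<prec> p \<longrightarrow> q \<prec> sup p q"
        using usm unfolding upper_semimodular_def by blast
      have yc: "y \<prec> sup x y" using u ixy ax by blast
      have xc: "x \<prec> sup x y" using u[rule_format, of y x] ixy ay
        by (simp add: inf_commute sup_commute)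
      have "sup x y \<le> b" using cc_le[OF xb] cc_le[OF yb] by simp
      then obtain k where kb: "cc (sup x y) b k"
        using cc_ex[OF fl] by blast
      have "cc x b (Suc k)" using ccS[OF xc kb] .
      then have nk: "n' = Suc k" using less.IH[of n' x b "Suc k"] Suc xb by simp
      have "cc y b (Suc k)" using ccS[OF yc kb] .
      then have "Suc k = m'" using less.IH[of "Suc k" y b m'] Suc nk yb by simp
      then show ?thesis using Suc Sm nk by simp
    qed
  qed
qed

definition rk :: "'a::order \<Rightarrow> 'a \<Rightarrow> nat" where
  "rk b x = (THE n. cc b x n)"

context
  fixes b0 :: "'a::lattice"
  assumes usm: "upper_semimodular TYPE('a)"
    and fl: "finite_length TYPE('a)"
    and bot: "\<And>x. b0 \<le> x"
begin

lemma rk_cc: "cc b0 x (rk b0 x)"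
proof -
  obtain n where "cc b0 x n" using cc_ex[OF fl bot] by blast
  then have "\<exists>!n. cc b0 x n" using cc_unique[OF usm fl] by blast
  then show ?thesis unfolding rk_def by (rule theI')
qed

lemma rk_le: "x \<le> y \<Longrightarrow> cc x y (rk b0 y - rk b0 x) \<and> rk b0 x \<le> rk b0 y"
proof -
  assume "x \<le> y"
  then obtain k where k: "cc x y k" using cc_ex[OF fl] by blast
  have "cc b0 y (rk b0 x + k)" using cc_trans[OF rk_cc k] .
  then have "rk b0 y = rk b0 x + k" using cc_unique[OF usm fl] rk_cc by blast
  then show ?thesis using k by simp
qed

lemma rk_less: "x < y \<Longrightarrow> rk b0 x < rk b0 y"
proof -
  assume xy: "x < y"
  then have h: "cc x y (rk b0 y - rk b0 x)" "rk b0 x \<le> rk b0 y" using rk_le by auto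
  have "rk b0 y - rk b0 x \<noteq> 0"
  proof
    assume "rk b0 y - rk b0 x = 0"
    with h(1) have "cc x y 0" by simp
    then have "x = y" by (rule cc_0)
    with xy show False by simp
  qed
  then show ?thesis using h(2) by simp
qed

lemma rk_cover: "x \<prec> y \<Longrightarrow> rk b0 y = Suc (rk b0 x)"
proof -
  assume c: "x \<prec> y"
  have "cc x y 1" using ccS[OF c cc0] by simp
  moreover have "cc x y (rk b0 y - rk b0 x)" "rk b0 x \<le> rk b0 y"
    using rk_le c by (auto simp: covers_def)
  ultimately show ?thesis using cc_unique[OF usm fl] by fastforce
qed

lemma sup_step:
  fixes z z' x :: 'a
  assumes c: "z \<prec> z'"
  shows "sup z x = sup z' x \<or> sup z x \<prec> sup z' x"
proof (cases "z' \<le> sup z x")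
  case True
  have "sup z' x \<le> sup z x" by (rule sup_least[OF \<open>z' \<le> sup z x\<close> sup_ge2])
  moreover have "sup z x \<le> sup z' x" using c by (auto simp: covers_def intro: le_supI1)
  ultimately show ?thesis by (metis antisym)
next
  case False
  have zle: "z \<le> inf z' (sup z x)" using c unfolding covers_def by (auto intro: less_imp_le)
  have "inf z' (sup z x) \<noteq> z'" using False by (metis inf.absorb_iff1)
  then have "inf z' (sup z x) < z'" by (simp add: order.not_eq_order_implies_strict)
  then have eq: "inf z' (sup z x) = z" using zle c unfolding covers_def
    by (metis order.not_eq_order_implies_strict)
  have "\<forall>p q::'a. inf p q \<prec> p \<longrightarrow> q \<prec> sup p q"
    using usm unfolding upper_semimodular_def by blast
  then have "sup z x \<prec> sup z' (sup z x)" using eq c by simp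
  moreover have "sup z' (sup z x) = sup z' x"
  proof -
    have "sup z' z = z'" using c unfolding covers_def by (simp add: sup.absorb1 less_imp_le)
    then show ?thesis by (metis sup_assoc)
  qed
  ultimately show ?thesis by simp
qed

lemma step_bound:
  assumes "(z, y) \<in> cover_edges"
  shows "\<bar>(2 * int (rk b0 (sup z x)) - int (rk b0 z)) - (2 * int (rk b0 (sup y x)) - int (rk b0 y))\<bar> \<le> 1"
proof -
  have gen: "\<bar>(2 * int (rk b0 (sup p x)) - int (rk b0 p)) - (2 * int (rk b0 (sup q x)) - int (rk b0 q))\<bar> \<le> 1"
    if "p \<prec> q" for p q
  proof -
    have rq: "rk b0 q = Suc (rk b0 p)" using rk_cover that .
    from sup_step[OF that, of x] show ?thesis
    proof
      assume "sup p x = sup q x" then show ?thesis using rq by simp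
    next
      assume "sup p x \<prec> sup q x"
      then have "rk b0 (sup q x) = Suc (rk b0 (sup p x))" using rk_cover by blast
      then show ?thesis using rq by simp
    qed
  qed
  from assms show ?thesis unfolding cover_edges_def using gen by fastforce
qed

lemma dist_lower_path:
  "(z, x) \<in> cover_edges ^^ n \<Longrightarrow> 2 * int (rk b0 (sup z x)) - int (rk b0 z) - int (rk b0 x) \<le> int n"
proof (induction n arbitrary: z)
  case 0 thus ?case by simp
next
  case (Suc n)
  from Suc.prems obtain y where zy: "(z, y) \<in> cover_edges" and yx: "(y, x) \<in> cover_edges ^^ n"
    by (rule relpow_Suc_E2)
  have "2 * int (rk b0 (sup y x)) - int (rk b0 y) - int (rk b0 x) \<le> int n" using Suc.IH yx .
  moreover have "\<bar>(2 * int (rk b0 (sup z x)) - int (rk b0 z)) - (2 * int (rk b0 (sup y x)) - int (rk b0 y))\<bar> \<le> 1"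
    using step_bound zy .
  ultimately show ?case by simp
qed

lemma path_join:
  assumes "a \<le> s" "c \<le> s"
  shows "(a, c) \<in> cover_edges ^^ ((rk b0 s - rk b0 a) + (rk b0 s - rk b0 c))"
proof -
  have "(a, s) \<in> cover_edges ^^ (rk b0 s - rk b0 a)" using rk_le[OF assms(1)] cc_path by blast
  moreover have "(s, c) \<in> cover_edges ^^ (rk b0 s - rk b0 c)" using rk_le[OF assms(2)] cc_path by blast
  ultimately show ?thesis by (auto simp: relpow_add)
qed

lemma dist_upper:
  "int (cdist a c) \<le> 2 * int (rk b0 (sup a c)) - int (rk b0 a) - int (rk b0 c)"
proof -
  have "(a, c) \<in> cover_edges ^^ ((rk b0 (sup a c) - rk b0 a) + (rk b0 (sup a c) - rk b0 c))"
    using path_join by simp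
  then have "cdist a c \<le> (rk b0 (sup a c) - rk b0 a) + (rk b0 (sup a c) - rk b0 c)"
    unfolding cdist_def by (rule Least_le)
  moreover have "rk b0 a \<le> rk b0 (sup a c)" "rk b0 c \<le> rk b0 (sup a c)" using rk_le by auto
  ultimately show ?thesis by linarith
qed

lemma dist_lower:
  "2 * int (rk b0 (sup a c)) - int (rk b0 a) - int (rk b0 c) \<le> int (cdist a c)"
proof -
  have "\<exists>n. (a, c) \<in> cover_edges ^^ n" using path_join[of a "sup a c" c] by auto
  then have "(a, c) \<in> cover_edges ^^ (cdist a c)" unfolding cdist_def by (rule LeastI_ex)
  then show ?thesis by (rule dist_lower_path)
qed

end

lemma remote_sum: "remote w xs = (\<Sum>i<length xs. cdist w (xs ! i))"
  unfolding remote_def by (simp add: sum_list_sum_nth atLeast0LessThan)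

theorem lemma3p2:
  fixes xs :: "'a::lattice list" and z :: 'a
  assumes "upper_semimodular TYPE('a)"
    and "finite_length TYPE('a)"
    and "xs \<noteq> []"
    and "\<not> z \<le> c1 xs"
    and "card {i. i < length xs \<and> \<not> xs ! i \<le> z \<and> \<not> z \<le> xs ! i}
           \<le> card {i. i < length xs \<and> xs ! i < z}"
  shows "z \<notin> medians xs"
proof
  assume zm: "z \<in> medians xs"
  note usm = assms(1) and fl = assms(2)
  obtain b0 :: 'a where "b0 \<in> UNIV" and b0: "\<And>y. (y, b0) \<in> {(x::'a, y). x < y} \<Longrightarrow> y \<notin> UNIV"
    using wfE_min[OF wf_down[OF fl] UNIV_I] by blast
  have bot: "b0 \<le> x" for x
  proof -
    have "\<not> inf b0 x < b0" using b0[of "inf b0 x"] by blast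
    then have "inf b0 x = b0" using inf_le1 order_less_le by blast
    then show ?thesis by (metis inf.absorb_iff1)
  qed
  define u where "u = c1 xs"
  define m where "m = inf z u"
  define h where "h = (\<lambda>x. int (rk b0 x))"
  define t where "t = h z - h m"
  have xu: "x \<le> u" if "x \<in> set xs" for x
    unfolding u_def c1_def using that by (simp add: Sup_fin.coboundedI)
  have mz: "m < z" using assms(4) unfolding m_def u_def
    by (metis inf.absorb_iff1 inf_le1 order_less_le)
  have t1: "t \<ge> 1" using rk_less[OF usm fl bot mz] unfolding t_def h_def by simp
  define B where "B = {i. i < length xs \<and> xs ! i < z}"
  define P where "P = {i. i < length xs \<and> \<not> xs ! i \<le> z \<and> \<not> z \<le> xs ! i}"
  have key: "int (cdist z (xs ! i)) - int (cdist m (xs ! i)) \<ge> (if i \<in> B then t else 2 - t)"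
    if i: "i < length xs" for i
  proof -
    define x where "x = xs ! i"
    have xin: "x \<in> set xs" using i unfolding x_def by simp
    have xu': "x \<le> u" using xu xin .
    have up: "int (cdist m x) \<le> 2 * h (sup m x) - h m - h x"
      using dist_upper[OF usm fl bot] unfolding h_def .
    have lo: "2 * h (sup z x) - h z - h x \<le> int (cdist z x)"
      using dist_lower[OF usm fl bot] unfolding h_def .
    show ?thesis
    proof (cases "x \<le> z")
      case True
      then have "x < z" using xu' assms(4) unfolding u_def by (metis order_less_le)
      then have iB: "i \<in> B" using i unfolding B_def x_def by simp
      have "sup m x = m" using True xu' unfolding m_def by (simp add: sup.absorb1)
      moreover have "sup z x = z" using True by (simp add: sup.absorb1)
      ultimately show ?thesis using up lo iB unfolding t_def x_def by simp
    next
      case False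
      then have iB: "i \<notin> B" unfolding B_def x_def by auto
      have le: "sup m x \<le> sup z x" by (rule sup_mono) (use mz in auto)
      have "sup m x \<noteq> sup z x"
      proof
        assume "sup m x = sup z x"
        then have "z \<le> sup m x" by (metis sup_ge1)
        moreover have "sup m x \<le> u" using xu' unfolding m_def by simp
        ultimately show False using assms(4) order_trans unfolding u_def by blast
      qed
      then have "sup m x < sup z x" using le order_less_le by blast
      then have "h (sup m x) < h (sup z x)" using rk_less[OF usm fl bot] unfolding h_def by simp
      then show ?thesis using up lo iB unfolding t_def x_def by simp
    qed
  qed
  have PB: "P = {..<length xs} - B"
  proof -
    have "\<not> z \<le> xs ! i" if "i < length xs" for i
    proof
      assume "z \<le> xs ! i"
      moreover have "xs ! i \<le> u" using xu that by simp
      ultimately show False using assms(4) unfolding u_def by simp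
    qed
    moreover have "xs ! i < z \<longleftrightarrow> xs ! i \<le> z" if "i < length xs" for i
      using calculation[OF that] by (metis order_less_le)
    ultimately show ?thesis unfolding P_def B_def by auto
  qed
  have Bsub: "B \<subseteq> {..<length xs}" unfolding B_def by auto
  have cardP: "card P = length xs - card B" unfolding PB using Bsub
    by (simp add: card_Diff_subset finite_subset)
  have cardB: "card B \<le> length xs" using card_mono[OF finite_lessThan Bsub] by simp
  have pb: "card P \<le> card B" using assms(5) unfolding P_def B_def .
  have sumif: "(\<Sum>i<length xs. (if i \<in> B then t else 2 - t)) = t * int (card B) + (2 - t) * int (card P)"
  proof -
    have "(\<Sum>i<length xs. (if i \<in> B then t else 2 - t))
        = (\<Sum>i\<in>{..<length xs} \<inter> {i. i \<in> B}. t) + (\<Sum>i\<in>{..<length xs} \<inter> - {i. i \<in> B}. 2 - t)"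
      by (rule sum.If_cases) simp
    moreover have "{..<length xs} \<inter> {i. i \<in> B} = B" using Bsub by auto
    moreover have "{..<length xs} \<inter> - {i. i \<in> B} = P" unfolding PB by auto
    ultimately show ?thesis by (simp add: mult.commute)
  qed
  have pos: "t * int (card B) + (2 - t) * int (card P) > 0"
  proof (cases "card P = 0")
    case True
    have "length xs \<ge> 1" using assms(3) by (cases xs) auto
    then have "card B \<ge> 1" using cardP True by simp
    then have "t * int (card B) \<ge> 1 * 1" using t1 by (intro mult_mono) auto
    then show ?thesis using True by simp
  next
    case False
    have "t * int (card B) \<ge> t * int (card P)" using t1 pb by (intro mult_left_mono) auto
    moreover have "t * int (card P) + (2 - t) * int (card P) = 2 * int (card P)" by (simp add: algebra_simps)
    ultimately show ?thesis using False by linarith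
  qed
  have "int (remote z xs) - int (remote m xs) = (\<Sum>i<length xs. int (cdist z (xs ! i)) - int (cdist m (xs ! i)))"
    unfolding remote_sum by (simp add: sum_subtractf)
  also have "\<dots> \<ge> (\<Sum>i<length xs. (if i \<in> B then t else 2 - t))"
    by (rule sum_mono) (use key in auto)
  finally have "int (remote z xs) > int (remote m xs)" using sumif pos by linarith
  moreover have "remote z xs \<le> remote m xs" using zm unfolding medians_def by blast
  ultimately show False by simp
qed

end
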